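(* Let $\Gamma$ be a regular axis-parallel square grid in the plane whose squares have diameter $1$ (side length $1/\sqrt{2}$), and call the open squares of $\Gamma$ cells. Consider two cells $\pi$ and $\pi'$. Let $p_1,p_2$ be any two points in $\pi'$ and $p_3,p_4$ be any two points in $\pi$. For points $x,y$ let $D(x,y)$ denote the closed disk having segment $xy$ as a diameter, and let $\mathcal{D}=D(p_1,p_2)\cup D(p_2,p_3)\cup D(p_3,p_4)$. Then: 1. If $|p_2p_3|\le 1/\sqrt{2}$, then $\mathcal{D}$ intersects at most $8$ cells. 2. If $|p_2p_3|\le 1$ and $\pi,\pi'$ are $+$-neighbors, then $\mathcal{D}$ intersects at most $8$ cells. 3. If $|p_2p_3|\le 1$ and $\pi,\pi'$ are $\times$-neighbors, then $\mathcal{D}$ intersects at most $10$ cells. 4. If $|p_2p_3|\le 1$ and $\pi,\pi'$ are not neighbors, then $\mathcal{D}$ intersects at most $11$ cells.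
   Context: The neighbors of a cell $\pi$ are the eight cells sharing a side or a corner with $\pi$. These are partitioned into the four $+$-neighbors (cells sharing a side with $\pi$) and the four $\times$-neighbors (cells sharing exactly one grid point with $\pi$). Cells are open (they do not contain their boundary), and disks are closed. *)

theory Defs
  imports "HOL-Analysis.Analysis"
begin

definition side :: real where "side = 1 / sqrt 2"

text \<open>The regular axis-parallel grid with offset (a,b): the open cell with integer index (i,j).\<close>
definition cell :: "real \<times> real \<Rightarrow> int \<times> int \<Rightarrow> (real \<times> real) set" where
  "cell off ij = {p. fst off + of_int (fst ij) * side < fst p \<and> fst p < fst off + of_int (fst ij + 1) * side
                  \<and> snd off + of_int (snd ij) * side < snd p \<and> snd p < snd off + of_int (snd ij + 1) * side}"

definition diskD :: "real \<times> real \<Rightarrow> real \<times> real \<Rightarrow> (real \<times> real) set" where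
  "diskD x y = cball (midpoint x y) (dist x y / 2)"

definition cells_hit :: "real \<times> real \<Rightarrow> (real \<times> real) set \<Rightarrow> (int \<times> int) set" where
  "cells_hit off S = {ij. cell off ij \<inter> S \<noteq> {}}"

definition plus_nb :: "int \<times> int \<Rightarrow> int \<times> int \<Rightarrow> bool" where
  "plus_nb c c' \<longleftrightarrow> \<bar>fst c - fst c'\<bar> + \<bar>snd c - snd c'\<bar> = 1"

definition times_nb :: "int \<times> int \<Rightarrow> int \<times> int \<Rightarrow> bool" where
  "times_nb c c' \<longleftrightarrow> \<bar>fst c - fst c'\<bar> = 1 \<and> \<bar>snd c - snd c'\<bar> = 1"

definition nb :: "int \<times> int \<Rightarrow> int \<times> int \<Rightarrow> bool" where
  "nb c c' \<longleftrightarrow> plus_nb c c' \<or> times_nb c c'"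

end

theory Submission
  imports Defs
begin


definition inD :: "real \<times> real \<Rightarrow> real \<times> real \<Rightarrow> real \<times> real \<Rightarrow> bool" where
  "inD p q z \<longleftrightarrow> (fst p - fst z) * (fst q - fst z) + (snd p - snd z) * (snd q - snd z) \<le> 0"

definition ucell :: "int \<times> int \<Rightarrow> (real \<times> real) set" where
  "ucell kl = {z. of_int (fst kl) < fst z \<and> fst z < of_int (fst kl) + 1
               \<and> of_int (snd kl) < snd z \<and> snd z < of_int (snd kl) + 1}"

definition d2 :: "real \<times> real \<Rightarrow> real \<times> real \<Rightarrow> real" where
  "d2 p q = (fst p - fst q)^2 + (snd p - snd q)^2"

lemma prod_le0: "(a - z) * (b - z) \<le> (0::real) \<Longrightarrow> (a \<le> z \<and> z \<le> b) \<or> (b \<le> z \<and> z \<le> a)"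
  by (auto simp: mult_le_0_iff)

lemma inD_cross: "inD p q z \<Longrightarrow>
   (fst p \<le> fst z \<and> fst z \<le> fst q) \<or> (fst q \<le> fst z \<and> fst z \<le> fst p) \<or>
   (snd p \<le> snd z \<and> snd z \<le> snd q) \<or> (snd q \<le> snd z \<and> snd z \<le> snd p)"
proof -
  assume h: "inD p q z"
  have "(fst p - fst z) * (fst q - fst z) \<le> 0 \<or> (snd p - snd z) * (snd q - snd z) \<le> 0"
    using h unfolding inD_def by linarith
  thus ?thesis using prod_le0 by blast
qed

lemma inD_box: "inD p q z \<Longrightarrow>
   (2 * fst z - fst p - fst q)^2 \<le> d2 p q \<and> (2 * snd z - snd p - snd q)^2 \<le> d2 p q"
proof -
  assume h: "inD p q z"
  have e: "(2 * fst z - fst p - fst q)^2 + (2 * snd z - snd p - snd q)^2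
      = 4 * ((fst p - fst z) * (fst q - fst z) + (snd p - snd z) * (snd q - snd z)) + d2 p q"
    unfolding d2_def by (simp add: power2_eq_square algebra_simps)
  have "(fst p - fst z) * (fst q - fst z) + (snd p - snd z) * (snd q - snd z) \<le> 0"
    using h unfolding inD_def .
  moreover have "0 \<le> (2 * fst z - fst p - fst q)^2" "0 \<le> (2 * snd z - snd p - snd q)^2" by auto
  ultimately show ?thesis using e
    by (smt (verit))
qed

lemma sq_le2: "(t::real)^2 \<le> 2 \<Longrightarrow> -3/2 < t \<and> t < 3/2"
proof -
  assume h: "t^2 \<le> 2"
  have "\<bar>t\<bar> < 3/2"
  proof (rule ccontr)
    assume "\<not> \<bar>t\<bar> < 3/2"
    hence "3/2 \<le> \<bar>t\<bar>" by simp
    hence "(3/2)^2 \<le> \<bar>t\<bar>^2" by (rule power_mono) simp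
    moreover have "(3/2::real)^2 = 9/4" by (simp add: power2_eq_square)
    ultimately show False using h by simp
  qed
  thus ?thesis by linarith
qed

lemma sq_le1: "(t::real)^2 \<le> 1 \<Longrightarrow> -1 \<le> t \<and> t \<le> 1"
  by (metis abs_le_D1 abs_le_D2 abs_square_le_1 minus_le_iff)

lemma span: "inD p q z1 \<Longrightarrow> inD p q z2 \<Longrightarrow> d2 p q \<le> 2 \<Longrightarrow>
   \<bar>fst z1 - fst z2\<bar> < 3/2 \<and> \<bar>snd z1 - snd z2\<bar> < 3/2"
proof -
  assume a: "inD p q z1" "inD p q z2" "d2 p q \<le> 2"
  from inD_box[OF a(1)] inD_box[OF a(2)] a(3) have
    "-3/2 < 2 * fst z1 - fst p - fst q \<and> 2 * fst z1 - fst p - fst q < 3/2"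
    "-3/2 < 2 * fst z2 - fst p - fst q \<and> 2 * fst z2 - fst p - fst q < 3/2"
    "-3/2 < 2 * snd z1 - snd p - snd q \<and> 2 * snd z1 - snd p - snd q < 3/2"
    "-3/2 < 2 * snd z2 - snd p - snd q \<and> 2 * snd z2 - snd p - snd q < 3/2"
    by (meson order_trans sq_le2)+
  thus ?thesis by linarith
qed

lemma int_lt: "(of_int k::real) < x \<Longrightarrow> x \<le> of_int m \<Longrightarrow> k < m"
  by (metis le_less_trans of_int_less_iff not_le order_less_le_trans)

lemma int_ge: "x < (of_int k::real) + 1 \<Longrightarrow> of_int m \<le> x \<Longrightarrow> m \<le> k"
proof -
  assume "x < of_int k + 1" "of_int m \<le> x"
  hence "(of_int m::real) < of_int (k+1)" by simp
  hence "m < k + 1" by (simp only: of_int_less_iff)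
  thus ?thesis by simp
qed

lemma int_eq: "(of_int a::real) < x \<Longrightarrow> x < of_int a + 1 \<Longrightarrow> of_int k < x \<Longrightarrow> x < of_int k + 1 \<Longrightarrow> k = a"
proof -
  assume h: "(of_int a::real) < x" "x < of_int a + 1" "of_int k < x" "x < of_int k + 1"
  have "(of_int a::real) < of_int (k+1)" "(of_int k::real) < of_int (a+1)" using h by simp_all
  hence "a < k + 1" "k < a + 1" by (simp_all only: of_int_less_iff)
  thus ?thesis by simp
qed

lemma d2_lt2: "p \<in> ucell a \<Longrightarrow> q \<in> ucell a \<Longrightarrow> d2 p q < 2"
proof -
  assume "p \<in> ucell a" "q \<in> ucell a"
  hence "\<bar>fst p - fst q\<bar> < 1" "\<bar>snd p - snd q\<bar> < 1" unfolding ucell_def by auto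
  hence "(fst p - fst q)^2 < 1" "(snd p - snd q)^2 < 1" by (simp_all add: abs_square_less_1)
  thus ?thesis unfolding d2_def by simp
qed

lemma factN: assumes "p \<in> ucell (a,b)" "q \<in> ucell (a,b)" "z \<in> ucell (k,l)" "inD p q z"
  shows "(k,l) \<in> {(a,b),(a-1,b),(a+1,b),(a,b-1),(a,b+1)}"
proof -
  have d: "d2 p q \<le> 2" using d2_lt2[OF assms(1,2)] by simp
  from inD_box[OF assms(4)] d have
    "-3/2 < 2 * fst z - fst p - fst q \<and> 2 * fst z - fst p - fst q < 3/2"
    "-3/2 < 2 * snd z - snd p - snd q \<and> 2 * snd z - snd p - snd q < 3/2"
    by (meson order_trans sq_le2)+
  with assms(1-3) have k1: "a - 1 \<le> k" "k < a + 2" "b - 1 \<le> l" "l < b + 2"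
    unfolding ucell_def
    by (auto intro!: int_ge[of "fst z"] int_lt[of _ "fst z"] int_ge[of "snd z"] int_lt[of _ "snd z"])
  from inD_cross[OF assms(4)] assms(1-3) have "k = a \<or> l = b"
    unfolding ucell_def
    by (auto intro: int_eq)
  thus ?thesis using k1 by auto
qed


lemma kge: "z \<in> ucell (k,l) \<Longrightarrow> real_of_int m \<le> fst z \<Longrightarrow> m \<le> k"
  unfolding ucell_def by (auto intro: int_ge)
lemma klt: "z \<in> ucell (k,l) \<Longrightarrow> fst z \<le> real_of_int m \<Longrightarrow> k < m"
  unfolding ucell_def by (auto intro: int_lt)
lemma lge: "z \<in> ucell (k,l) \<Longrightarrow> real_of_int m \<le> snd z \<Longrightarrow> m \<le> l"
  unfolding ucell_def by (auto intro: int_ge)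
lemma llt: "z \<in> ucell (k,l) \<Longrightarrow> snd z \<le> real_of_int m \<Longrightarrow> l < m"
  unfolding ucell_def by (auto intro: int_lt)
lemma ucellD: "z \<in> ucell (k,l) \<Longrightarrow> of_int k < fst z \<and> fst z < of_int k + 1 \<and> of_int l < snd z \<and> snd z < of_int l + 1"
  unfolding ucell_def by simp

lemma box2: "inD p q z \<Longrightarrow> d2 p q \<le> 2 \<Longrightarrow>
    -3/2 < 2 * fst z - fst p - fst q \<and> 2 * fst z - fst p - fst q < 3/2 \<and>
    -3/2 < 2 * snd z - snd p - snd q \<and> 2 * snd z - snd p - snd q < 3/2"
  using inD_box sq_le2 by (meson order_trans)

lemma box1: "inD p q z \<Longrightarrow> d2 p q \<le> 1 \<Longrightarrow>
    -1 \<le> 2 * fst z - fst p - fst q \<and> 2 * fst z - fst p - fst q \<le> 1 \<and>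
    -1 \<le> 2 * snd z - snd p - snd q \<and> 2 * snd z - snd p - snd q \<le> 1"
  using inD_box sq_le1 by (meson order_trans)

lemma inD_sum: "inD p q z \<Longrightarrow>
   (fst p - fst z)^2 + (snd p - snd z)^2 + (fst q - fst z)^2 + (snd q - snd z)^2 \<le> d2 p q"
proof -
  assume h: "inD p q z"
  have e: "(fst p - fst z)^2 + (snd p - snd z)^2 + (fst q - fst z)^2 + (snd q - snd z)^2
      = 2 * ((fst p - fst z) * (fst q - fst z) + (snd p - snd z) * (snd q - snd z)) + d2 p q"
    unfolding d2_def by (simp add: power2_eq_square algebra_simps)
  show ?thesis using h e unfolding inD_def by (smt (verit))
qed

lemma gt1sq: "1 < \<bar>t::real\<bar> \<Longrightarrow> 1 < t^2"
  by (metis one_less_power pos2 power2_abs)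

lemma mid10: assumes "p \<in> ucell (0,0)" "q \<in> ucell (1,0)" "z \<in> ucell (k,l)" "inD p q z" "d2 p q \<le> 2"
  shows "(k,l) \<in> {(0,0),(-1,0),(1,0),(0,1),(0,-1),(2,0),(1,1),(1,-1)}"
proof -
  note P = ucellD[OF assms(1)] and Q = ucellD[OF assms(2)] and Z = ucellD[OF assms(3)]
  note B = box2[OF assms(4,5)]
  have "-1 \<le> fst z" using P Q B by linarith
  hence k1: "-1 \<le> k" using kge[OF assms(3), of "-1"] by simp
  have "fst z \<le> 3" using P Q B by linarith
  hence k2: "k < 3" using klt[OF assms(3), of 3] by simp
  have "-1 \<le> snd z" using P Q B by linarith
  hence l1: "-1 \<le> l" using lge[OF assms(3), of "-1"] by simp
  have "snd z \<le> 2" using P Q B by linarith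
  hence l2: "l < 2" using llt[OF assms(3), of 2] by simp
  have "(0 \<le> fst z \<and> fst z \<le> 2) \<or> (0 \<le> snd z \<and> snd z \<le> 1)"
    using inD_cross[OF assms(4)] P Q by auto
  hence "(0 \<le> k \<and> k < 2) \<or> (0 \<le> l \<and> l < 1)"
    using kge[OF assms(3), of 0] klt[OF assms(3), of 2] lge[OF assms(3), of 0] llt[OF assms(3), of 1] by auto
  hence "(k = 0 \<or> k = 1) \<and> (l = -1 \<or> l = 0 \<or> l = 1) \<or> l = 0 \<and> (k = -1 \<or> k = 0 \<or> k = 1 \<or> k = 2)"
    using k1 k2 l1 l2 by presburger
  thus ?thesis by auto
qed


lemma mid11a: assumes "p \<in> ucell (0,0)" "q \<in> ucell (1,1)" "z \<in> ucell (k,l)" "inD p q z" "d2 p q \<le> 1"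
  shows "(k,l) \<in> {(0,0),(1,0),(0,1),(1,1)}"
proof -
  note P = ucellD[OF assms(1)] and Q = ucellD[OF assms(2)] and Z = ucellD[OF assms(3)]
  note B = box1[OF assms(4,5)]
  have "0 \<le> fst z" using P Q B by linarith
  hence k1: "0 \<le> k" using kge[OF assms(3), of 0] by simp
  have "fst z \<le> 2" using P Q B by linarith
  hence k2: "k < 2" using klt[OF assms(3), of 2] by simp
  have "0 \<le> snd z" using P Q B by linarith
  hence l1: "0 \<le> l" using lge[OF assms(3), of 0] by simp
  have "snd z \<le> 2" using P Q B by linarith
  hence l2: "l < 2" using llt[OF assms(3), of 2] by simp
  have "(k = 0 \<or> k = 1) \<and> (l = 0 \<or> l = 1)"
    using k1 k2 l1 l2 by presburger
  thus ?thesis by auto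
qed

lemma mid11: assumes "p \<in> ucell (0,0)" "q \<in> ucell (1,1)" "z \<in> ucell (k,l)" "inD p q z" "d2 p q \<le> 2"
  shows "(k,l) \<in> {(0,-1),(0,0),(0,1),(0,2),(1,-1),(1,0),(1,1),(1,2),(-1,0),(-1,1),(2,0),(2,1)}"
proof -
  note P = ucellD[OF assms(1)] and Q = ucellD[OF assms(2)] and Z = ucellD[OF assms(3)]
  note B = box2[OF assms(4,5)]
  have "-1 \<le> fst z" using P Q B by linarith
  hence k1: "-1 \<le> k" using kge[OF assms(3), of "-1"] by simp
  have "fst z \<le> 3" using P Q B by linarith
  hence k2: "k < 3" using klt[OF assms(3), of 3] by simp
  have "-1 \<le> snd z" using P Q B by linarith
  hence l1: "-1 \<le> l" using lge[OF assms(3), of "-1"] by simp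
  have "snd z \<le> 3" using P Q B by linarith
  hence l2: "l < 3" using llt[OF assms(3), of 3] by simp
  have "(0 \<le> fst z \<and> fst z \<le> 2) \<or> (0 \<le> snd z \<and> snd z \<le> 2)"
    using inD_cross[OF assms(4)] P Q by auto
  hence "(0 \<le> k \<and> k < 2) \<or> (0 \<le> l \<and> l < 2)"
    using kge[OF assms(3), of 0] klt[OF assms(3), of 2] lge[OF assms(3), of 0] llt[OF assms(3), of 2] by auto
  hence "(k = 0 \<or> k = 1) \<and> (l = -1 \<or> l = 0 \<or> l = 1 \<or> l = 2) \<or> (l = 0 \<or> l = 1) \<and> (k = -1 \<or> k = 0 \<or> k = 1 \<or> k = 2)"
    using k1 k2 l1 l2 by presburger
  thus ?thesis by auto
qed

lemma mid20: assumes "p \<in> ucell (0,0)" "q \<in> ucell (2,0)" "z \<in> ucell (k,l)" "inD p q z" "d2 p q \<le> 2"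
  shows "(k,l) \<in> {(0,-1),(0,0),(0,1),(1,-1),(1,0),(1,1),(2,-1),(2,0),(2,1)}"
proof -
  note P = ucellD[OF assms(1)] and Q = ucellD[OF assms(2)] and Z = ucellD[OF assms(3)]
  note B = box2[OF assms(4,5)]
  have "0 \<le> fst z" using P Q B by linarith
  hence k1: "0 \<le> k" using kge[OF assms(3), of 0] by simp
  have "fst z \<le> 3" using P Q B by linarith
  hence k2: "k < 3" using klt[OF assms(3), of 3] by simp
  have "-1 \<le> snd z" using P Q B by linarith
  hence l1: "-1 \<le> l" using lge[OF assms(3), of "-1"] by simp
  have "snd z \<le> 2" using P Q B by linarith
  hence l2: "l < 2" using llt[OF assms(3), of 2] by simp
  have "(k = 0 \<or> k = 1 \<or> k = 2) \<and> (l = -1 \<or> l = 0 \<or> l = 1)"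
    using k1 k2 l1 l2 by presburger
  thus ?thesis by auto
qed

lemma mid21: assumes "p \<in> ucell (0,0)" "q \<in> ucell (2,1)" "z \<in> ucell (k,l)" "inD p q z" "d2 p q \<le> 2"
  shows "(k,l) \<in> {(0,-1),(0,0),(0,1),(1,-1),(1,0),(1,1),(1,2),(2,0),(2,1),(2,2)}"
proof -
  note P = ucellD[OF assms(1)] and Q = ucellD[OF assms(2)] and Z = ucellD[OF assms(3)]
  note B = box2[OF assms(4,5)]
  note S = inD_sum[OF assms(4)]
  have "0 \<le> fst z" using P Q B by linarith
  hence k1: "0 \<le> k" using kge[OF assms(3), of 0] by simp
  have "fst z \<le> 3" using P Q B by linarith
  hence k2: "k < 3" using klt[OF assms(3), of 3] by simp
  have "-1 \<le> snd z" using P Q B by linarith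
  hence l1: "-1 \<le> l" using lge[OF assms(3), of "-1"] by simp
  have "snd z \<le> 3" using P Q B by linarith
  hence l2: "l < 3" using llt[OF assms(3), of 3] by simp
  have n02: "(k,l) \<noteq> (0,2)"
  proof
    assume "(k,l) = (0,2)"
    hence "1 < \<bar>snd p - snd z\<bar>" "1 < \<bar>fst q - fst z\<bar>" using P Q Z by auto
    hence "1 < (snd p - snd z)^2" "1 < (fst q - fst z)^2" using gt1sq by auto
    thus False using S assms(5) by (smt (verit) zero_le_power2)
  qed
  have n21: "(k,l) \<noteq> (2,-1)"
  proof
    assume "(k,l) = (2,-1)"
    hence "1 < \<bar>fst p - fst z\<bar>" "1 < \<bar>snd q - snd z\<bar>" using P Q Z by auto
    hence "1 < (fst p - fst z)^2" "1 < (snd q - snd z)^2" using gt1sq by auto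
    thus False using S assms(5) by (smt (verit) zero_le_power2)
  qed
  have "(k = 0 \<or> k = 1 \<or> k = 2) \<and> (l = -1 \<or> l = 0 \<or> l = 1 \<or> l = 2)"
    using k1 k2 l1 l2 by presburger
  thus ?thesis using n02 n21 by auto
qed



definition Hu :: "real \<times> real \<Rightarrow> real \<times> real \<Rightarrow> real \<times> real \<Rightarrow> real \<times> real \<Rightarrow> (int \<times> int) set" where
  "Hu p1 p2 p3 p4 = {kl. \<exists>z\<in>ucell kl. inD p1 p2 z \<or> inD p2 p3 z \<or> inD p3 p4 z}"

definition Nb :: "int \<times> int \<Rightarrow> (int \<times> int) set" where
  "Nb ab = {ab, (fst ab - 1, snd ab), (fst ab + 1, snd ab), (fst ab, snd ab - 1), (fst ab, snd ab + 1)}"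

lemma H_sub: assumes "p1 \<in> ucell c'" "p2 \<in> ucell c'" "p3 \<in> ucell c" "p4 \<in> ucell c"
  "\<And>z k l. z \<in> ucell (k,l) \<Longrightarrow> inD p2 p3 z \<Longrightarrow> (k,l) \<in> M"
  shows "Hu p1 p2 p3 p4 \<subseteq> Nb c' \<union> Nb c \<union> M"
proof
  fix kl assume "kl \<in> Hu p1 p2 p3 p4"
  then obtain z where z: "z \<in> ucell kl" "inD p1 p2 z \<or> inD p2 p3 z \<or> inD p3 p4 z" unfolding Hu_def by auto
  obtain k l where kl: "kl = (k,l)" by force
  obtain a b where ab: "c' = (a,b)" by force
  obtain a' b' where ab': "c = (a',b')" by force
  from z(2) show "kl \<in> Nb c' \<union> Nb c \<union> M"
  proof (elim disjE)
    assume "inD p1 p2 z" thus ?thesis using factN[of p1 a b p2 z k l] assms z(1) kl ab unfolding Nb_def by auto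
  next
    assume "inD p2 p3 z" thus ?thesis using assms(5) z(1) kl by auto
  next
    assume "inD p3 p4 z" thus ?thesis using factN[of p3 a' b' p4 z k l] assms z(1) kl ab' unfolding Nb_def by auto
  qed
qed

lemma H_mid: assumes "p1 \<in> ucell c'" "p2 \<in> ucell c'" "p3 \<in> ucell c" "p4 \<in> ucell c"
  "kl \<in> Hu p1 p2 p3 p4" "kl \<notin> Nb c'" "kl \<notin> Nb c"
  shows "\<exists>z\<in>ucell kl. inD p2 p3 z"
proof -
  have "Hu p1 p2 p3 p4 \<subseteq> Nb c' \<union> Nb c \<union> {kl. \<exists>z\<in>ucell kl. inD p2 p3 z}"
    by (rule H_sub[OF assms(1-4)]) auto
  thus ?thesis using assms(5-7) by auto
qed

definition Qp :: "int \<times> int \<Rightarrow> int \<times> int \<Rightarrow> (int \<times> int) set \<Rightarrow> real \<Rightarrow> bool" where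
  "Qp c' c H d \<longleftrightarrow> (d \<le> 1 \<longrightarrow> finite H \<and> card H \<le> 8)
       \<and> (d \<le> 2 \<and> plus_nb c c' \<longrightarrow> finite H \<and> card H \<le> 8)
       \<and> (d \<le> 2 \<and> times_nb c c' \<longrightarrow> finite H \<and> card H \<le> 10)
       \<and> (d \<le> 2 \<and> \<not> nb c c' \<longrightarrow> finite H \<and> card H \<le> 11)"

lemma fin_card: "H \<subseteq> S \<Longrightarrow> finite S \<Longrightarrow> card S \<le> n \<Longrightarrow> finite H \<and> card H \<le> n"
proof -
  assume a: "H \<subseteq> S" "finite S" "card S \<le> n"
  have "card H \<le> card S" by (rule card_mono[OF a(2,1)])
  thus ?thesis using a finite_subset by auto
qed

lemma core00: assumes "p1 \<in> ucell (0,0)" "p2 \<in> ucell (0,0)" "p3 \<in> ucell (0,0)" "p4 \<in> ucell (0,0)"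
  shows "Qp (0,0) (0,0) (Hu p1 p2 p3 p4) (d2 p2 p3)"
proof -
  have "Hu p1 p2 p3 p4 \<subseteq> Nb (0,0) \<union> Nb (0,0) \<union> Nb (0,0)"
  proof (rule H_sub[OF assms])
    fix z k l assume "z \<in> ucell (k,l)" "inD p2 p3 z"
    from factN[OF assms(2,3) this] show "(k,l) \<in> Nb (0,0)" by (simp add: Nb_def)
  qed
  hence "finite (Hu p1 p2 p3 p4) \<and> card (Hu p1 p2 p3 p4) \<le> 5"
    by (rule fin_card) (simp_all add: Nb_def)
  thus ?thesis unfolding Qp_def by auto
qed

lemma core10: assumes "p1 \<in> ucell (0,0)" "p2 \<in> ucell (0,0)" "p3 \<in> ucell (1,0)" "p4 \<in> ucell (1,0)"
  "d2 p2 p3 \<le> 2"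
  shows "Qp (0,0) (1,0) (Hu p1 p2 p3 p4) (d2 p2 p3)"
proof -
  have "Hu p1 p2 p3 p4 \<subseteq> Nb (0,0) \<union> Nb (1,0) \<union> {(0,0),(-1,0),(1,0),(0,1),(0,-1),(2,0),(1,1),(1,-1)}"
    by (rule H_sub[OF assms(1-4)], rule mid10[OF assms(2) assms(3) _ _ assms(5)])
  hence "finite (Hu p1 p2 p3 p4) \<and> card (Hu p1 p2 p3 p4) \<le> 8"
    by (rule fin_card) (simp_all add: Nb_def insert_commute)
  thus ?thesis unfolding Qp_def by auto
qed


lemma span_y: assumes "z1 \<in> ucell (k1,l1)" "z2 \<in> ucell (k2,l2)" "inD p q z1" "inD p q z2" "d2 p q \<le> 2"
  "l1 + 3 \<le> l2" shows False
proof -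
  have "real_of_int (l1 + 3) \<le> of_int l2" using assms(6) by (simp only: of_int_le_iff)
  thus False using span[OF assms(3-5)] ucellD[OF assms(1)] ucellD[OF assms(2)] by simp
qed

lemma span_x: assumes "z1 \<in> ucell (k1,l1)" "z2 \<in> ucell (k2,l2)" "inD p q z1" "inD p q z2" "d2 p q \<le> 2"
  "k1 + 3 \<le> k2" shows False
proof -
  have "real_of_int (k1 + 3) \<le> of_int k2" using assms(6) by (simp only: of_int_le_iff)
  thus False using span[OF assms(3-5)] ucellD[OF assms(1)] ucellD[OF assms(2)] by simp
qed

lemma excl_pair: assumes "p1 \<in> ucell c'" "p2 \<in> ucell c'" "p3 \<in> ucell c" "p4 \<in> ucell c"
  "d2 p2 p3 \<le> 2" "(k1,l1) \<notin> Nb c'" "(k1,l1) \<notin> Nb c" "(k2,l2) \<notin> Nb c'" "(k2,l2) \<notin> Nb c"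
  "k1 + 3 \<le> k2 \<or> l1 + 3 \<le> l2"
  shows "(k1,l1) \<notin> Hu p1 p2 p3 p4 \<or> (k2,l2) \<notin> Hu p1 p2 p3 p4"
proof (rule ccontr)
  assume "\<not> ?thesis"
  hence h: "(k1,l1) \<in> Hu p1 p2 p3 p4" "(k2,l2) \<in> Hu p1 p2 p3 p4" by auto
  obtain z1 where z1: "z1 \<in> ucell (k1,l1)" "inD p2 p3 z1" using H_mid[OF assms(1-4) h(1) assms(6,7)] by auto
  obtain z2 where z2: "z2 \<in> ucell (k2,l2)" "inD p2 p3 z2" using H_mid[OF assms(1-4) h(2) assms(8,9)] by auto
  show False using assms(10) span_x[OF z1(1) z2(1) z1(2) z2(2) assms(5)] span_y[OF z1(1) z2(1) z1(2) z2(2) assms(5)]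
    by auto
qed

lemma card_sub2: "H \<subseteq> S \<Longrightarrow> finite S \<Longrightarrow> e1 \<in> S \<Longrightarrow> e2 \<in> S \<Longrightarrow> e1 \<noteq> e2 \<Longrightarrow>
   e1 \<notin> H \<Longrightarrow> e2 \<notin> H \<Longrightarrow> card S \<le> n + 2 \<Longrightarrow> finite H \<and> card H \<le> n"
proof -
  assume a: "H \<subseteq> S" "finite S" "e1 \<in> S" "e2 \<in> S" "e1 \<noteq> e2" "e1 \<notin> H" "e2 \<notin> H" "card S \<le> n + 2"
  have s: "H \<subseteq> S - {e1,e2}" using a by auto
  have "card (S - {e1,e2}) = card S - 2" using a by (simp add: card_Diff_subset)
  hence "card (S - {e1,e2}) \<le> n" using a by linarith
  thus ?thesis using fin_card[OF s] a by blast
qed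

lemma card_sub1: "H \<subseteq> S \<Longrightarrow> finite S \<Longrightarrow> e1 \<in> S \<Longrightarrow>
   e1 \<notin> H \<Longrightarrow> card S \<le> n + 1 \<Longrightarrow> finite H \<and> card H \<le> n"
proof -
  assume a: "H \<subseteq> S" "finite S" "e1 \<in> S" "e1 \<notin> H" "card S \<le> n + 1"
  have s: "H \<subseteq> S - {e1}" using a by auto
  have "card (S - {e1}) = card S - 1" using a by simp
  hence "card (S - {e1}) \<le> n" using a by linarith
  thus ?thesis using fin_card[OF s] a by blast
qed

lemma core11: assumes "p1 \<in> ucell (0,0)" "p2 \<in> ucell (0,0)" "p3 \<in> ucell (1,1)" "p4 \<in> ucell (1,1)"
  "d2 p2 p3 \<le> 2"
  shows "Qp (0,0) (1,1) (Hu p1 p2 p3 p4) (d2 p2 p3)"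
proof -
  let ?H = "Hu p1 p2 p3 p4"
  have A: "finite ?H \<and> card ?H \<le> 8" if d1: "d2 p2 p3 \<le> 1"
  proof -
    have "?H \<subseteq> Nb (0,0) \<union> Nb (1,1) \<union> {(0,0),(1,0),(0,1),(1,1)}"
      by (rule H_sub[OF assms(1-4)], rule mid11a[OF assms(2) assms(3) _ _ d1])
    thus ?thesis by (rule fin_card) (simp_all add: Nb_def insert_commute)
  qed
  have sub: "?H \<subseteq> Nb (0,0) \<union> Nb (1,1) \<union> {(0,-1),(0,0),(0,1),(0,2),(1,-1),(1,0),(1,1),(1,2),(-1,0),(-1,1),(2,0),(2,1)}"
    by (rule H_sub[OF assms(1-4)], rule mid11[OF assms(2) assms(3) _ _ assms(5)])
  have e1: "(1,-1) \<notin> ?H \<or> (0,2) \<notin> ?H"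
    by (rule excl_pair[OF assms]) (simp_all add: Nb_def)
  have e2: "(-1,1) \<notin> ?H \<or> (2,0) \<notin> ?H"
    by (rule excl_pair[OF assms]) (simp_all add: Nb_def)
  have B: "finite ?H \<and> card ?H \<le> 10"
    using e1 e2
  proof (elim disjE)
    assume "(1,-1) \<notin> ?H" "(-1,1) \<notin> ?H" thus ?thesis
      by (rule card_sub2[OF sub, rotated 4]) (simp_all add: Nb_def insert_commute)
  next
    assume "(1,-1) \<notin> ?H" "(2,0) \<notin> ?H" thus ?thesis
      by (rule card_sub2[OF sub, rotated 4]) (simp_all add: Nb_def insert_commute)
  next
    assume "(0,2) \<notin> ?H" "(-1,1) \<notin> ?H" thus ?thesis
      by (rule card_sub2[OF sub, rotated 4]) (simp_all add: Nb_def insert_commute)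
  next
    assume "(0,2) \<notin> ?H" "(2,0) \<notin> ?H" thus ?thesis
      by (rule card_sub2[OF sub, rotated 4]) (simp_all add: Nb_def insert_commute)
  qed
  show ?thesis unfolding Qp_def using A B by (auto simp: plus_nb_def times_nb_def nb_def)
qed


lemma d2_gt1: assumes "p \<in> ucell (0,0)" "q \<in> ucell (2,l)" shows "1 < d2 p q"
proof -
  have "1 < \<bar>fst p - fst q\<bar>" using ucellD[OF assms(1)] ucellD[OF assms(2)] by auto
  hence "1 < (fst p - fst q)^2" by (rule gt1sq)
  thus ?thesis unfolding d2_def by (smt (verit) zero_le_power2)
qed

lemma core20: assumes "p1 \<in> ucell (0,0)" "p2 \<in> ucell (0,0)" "p3 \<in> ucell (2,0)" "p4 \<in> ucell (2,0)"
  "d2 p2 p3 \<le> 2"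
  shows "Qp (0,0) (2,0) (Hu p1 p2 p3 p4) (d2 p2 p3)"
proof -
  have "Hu p1 p2 p3 p4 \<subseteq> Nb (0,0) \<union> Nb (2,0) \<union> {(0,-1),(0,0),(0,1),(1,-1),(1,0),(1,1),(2,-1),(2,0),(2,1)}"
    by (rule H_sub[OF assms(1-4)], rule mid20[OF assms(2) assms(3) _ _ assms(5)])
  hence "finite (Hu p1 p2 p3 p4) \<and> card (Hu p1 p2 p3 p4) \<le> 11"
    by (rule fin_card) (simp_all add: Nb_def insert_commute)
  thus ?thesis using d2_gt1[OF assms(2,3)] unfolding Qp_def by (auto simp: plus_nb_def times_nb_def nb_def)
qed

lemma core21: assumes "p1 \<in> ucell (0,0)" "p2 \<in> ucell (0,0)" "p3 \<in> ucell (2,1)" "p4 \<in> ucell (2,1)"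
  "d2 p2 p3 \<le> 2"
  shows "Qp (0,0) (2,1) (Hu p1 p2 p3 p4) (d2 p2 p3)"
proof -
  let ?H = "Hu p1 p2 p3 p4"
  have sub: "?H \<subseteq> Nb (0,0) \<union> Nb (2,1) \<union> {(0,-1),(0,0),(0,1),(1,-1),(1,0),(1,1),(1,2),(2,0),(2,1),(2,2)}"
    by (rule H_sub[OF assms(1-4)], rule mid21[OF assms(2) assms(3) _ _ assms(5)])
  have e1: "(1,-1) \<notin> ?H \<or> (1,2) \<notin> ?H"
    by (rule excl_pair[OF assms]) (simp_all add: Nb_def)
  have B: "finite ?H \<and> card ?H \<le> 11"
    using e1
  proof (elim disjE)
    assume "(1,-1) \<notin> ?H" thus ?thesis
      by (rule card_sub1[OF sub, rotated 2]) (simp_all add: Nb_def insert_commute)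
  next
    assume "(1,2) \<notin> ?H" thus ?thesis
      by (rule card_sub1[OF sub, rotated 2]) (simp_all add: Nb_def insert_commute)
  qed
  thus ?thesis using d2_gt1[OF assms(2,3)] unfolding Qp_def by (auto simp: plus_nb_def times_nb_def nb_def)
qed

lemma core: assumes "p1 \<in> ucell (0,0)" "p2 \<in> ucell (0,0)" "p3 \<in> ucell (i,j)" "p4 \<in> ucell (i,j)"
  "0 \<le> j" "j \<le> i"
  shows "Qp (0,0) (i,j) (Hu p1 p2 p3 p4) (d2 p2 p3)"
proof (cases "d2 p2 p3 \<le> 2")
  case False thus ?thesis unfolding Qp_def by auto
next
  case True
  note P = ucellD[OF assms(2)] and Q = ucellD[OF assms(3)]
  have "(fst p2 - fst p3)^2 \<le> 2" using True unfolding d2_def by (smt (verit) zero_le_power2)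
  hence "fst p3 - fst p2 < 3/2" using sq_le2 by force
  hence "real_of_int i < of_int 2 + 1" using P Q by simp
  hence i2: "i \<le> 2" by (simp only: of_int_less_iff)
  have n22: "\<not> (i = 2 \<and> j = 2)"
  proof
    assume "i = 2 \<and> j = 2"
    hence "1 < \<bar>fst p2 - fst p3\<bar>" "1 < \<bar>snd p2 - snd p3\<bar>" using P Q by auto
    hence "1 < (fst p2 - fst p3)^2" "1 < (snd p2 - snd p3)^2" using gt1sq by auto
    thus False using True unfolding d2_def by simp
  qed
  have "(i,j) = (0,0) \<or> (i,j) = (1,0) \<or> (i,j) = (1,1) \<or> (i,j) = (2,0) \<or> (i,j) = (2,1)"
    using i2 n22 assms(5,6) by auto
  thus ?thesis
    using core00[of p1 p2 p3 p4] core10[of p1 p2 p3 p4] core11[of p1 p2 p3 p4]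
          core20[of p1 p2 p3 p4] core21[of p1 p2 p3 p4] assms True by auto
qed



lemma Hu_sym: assumes U: "\<And>z kl. T z \<in> ucell (g kl) \<longleftrightarrow> z \<in> ucell kl"
  and I: "\<And>p q z. inD (T p) (T q) (T z) = inD p q z" and sT: "surj T" and sg: "surj g"
  shows "Hu (T p1) (T p2) (T p3) (T p4) = g ` Hu p1 p2 p3 p4"
proof
  show "g ` Hu p1 p2 p3 p4 \<subseteq> Hu (T p1) (T p2) (T p3) (T p4)"
  proof
    fix x assume "x \<in> g ` Hu p1 p2 p3 p4"
    then obtain kl where x: "x = g kl" "kl \<in> Hu p1 p2 p3 p4" by auto
    then obtain z where "z \<in> ucell kl" "inD p1 p2 z \<or> inD p2 p3 z \<or> inD p3 p4 z" unfolding Hu_def by auto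
    hence "T z \<in> ucell (g kl)" "inD (T p1) (T p2) (T z) \<or> inD (T p2) (T p3) (T z) \<or> inD (T p3) (T p4) (T z)"
      using U I by auto
    thus "x \<in> Hu (T p1) (T p2) (T p3) (T p4)" unfolding Hu_def x by blast
  qed
next
  show "Hu (T p1) (T p2) (T p3) (T p4) \<subseteq> g ` Hu p1 p2 p3 p4"
  proof
    fix x assume "x \<in> Hu (T p1) (T p2) (T p3) (T p4)"
    then obtain w where w: "w \<in> ucell x" "inD (T p1) (T p2) w \<or> inD (T p2) (T p3) w \<or> inD (T p3) (T p4) w"
      unfolding Hu_def by auto
    obtain kl where kl: "x = g kl" using sg by (metis surjD)
    obtain z where z: "w = T z" using sT by (metis surjD)
    have "z \<in> ucell kl" "inD p1 p2 z \<or> inD p2 p3 z \<or> inD p3 p4 z" using w U I kl z by auto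
    hence "kl \<in> Hu p1 p2 p3 p4" unfolding Hu_def by blast
    thus "x \<in> g ` Hu p1 p2 p3 p4" using kl by blast
  qed
qed

lemma Qp_transfer: assumes "Qp (g c') (g c) (g ` H) d" "inj g"
  "plus_nb (g c) (g c') = plus_nb c c'" "times_nb (g c) (g c') = times_nb c c'" "nb (g c) (g c') = nb c c'"
  shows "Qp c' c H d"
proof -
  have "card (g ` H) = card H" using assms(2) by (simp add: card_image inj_on_subset)
  moreover have "finite (g ` H) = finite H" using assms(2) by (simp add: finite_image_iff inj_on_subset)
  ultimately show ?thesis using assms unfolding Qp_def by simp
qed

lemma sym_step: assumes U: "\<And>z kl. T z \<in> ucell (g kl) \<longleftrightarrow> z \<in> ucell kl"
  and I: "\<And>p q z. inD (T p) (T q) (T z) = inD p q z" and sT: "surj T" and sg: "surj g" and ig: "inj g"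
  and D: "\<And>p q. d2 (T p) (T q) = d2 p q"
  and N: "plus_nb (g c) (g c') = plus_nb c c'" "times_nb (g c) (g c') = times_nb c c'" "nb (g c) (g c') = nb c c'"
  and Q: "Qp (g c') (g c) (Hu (T p1) (T p2) (T p3) (T p4)) (d2 (T p2) (T p3))"
  shows "Qp c' c (Hu p1 p2 p3 p4) (d2 p2 p3)"
  using Q unfolding Hu_sym[OF U I sT sg] D by (rule Qp_transfer[OF _ ig N])

definition sw :: "real \<times> real \<Rightarrow> real \<times> real" where "sw z = (snd z, fst z)"
definition swi :: "int \<times> int \<Rightarrow> int \<times> int" where "swi z = (snd z, fst z)"
definition rx :: "real \<times> real \<Rightarrow> real \<times> real" where "rx z = (1 - fst z, snd z)"
definition rxi :: "int \<times> int \<Rightarrow> int \<times> int" where "rxi z = (- fst z, snd z)"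
definition ry :: "real \<times> real \<Rightarrow> real \<times> real" where "ry z = (fst z, 1 - snd z)"
definition ryi :: "int \<times> int \<Rightarrow> int \<times> int" where "ryi z = (fst z, - snd z)"
definition tr :: "int \<times> int \<Rightarrow> real \<times> real \<Rightarrow> real \<times> real" where "tr m z = (fst z - of_int (fst m), snd z - of_int (snd m))"
definition tri :: "int \<times> int \<Rightarrow> int \<times> int \<Rightarrow> int \<times> int" where "tri m z = (fst z - fst m, snd z - snd m)"

lemma sw_props:
  "sw z \<in> ucell (swi kl) \<longleftrightarrow> z \<in> ucell kl" "inD (sw p) (sw q) (sw z) = inD p q z" "surj sw" "surj swi" "inj swi"
  "d2 (sw p) (sw q) = d2 p q"
  "plus_nb (swi c) (swi c') = plus_nb c c'" "times_nb (swi c) (swi c') = times_nb c c'" "nb (swi c) (swi c') = nb c c'"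
  unfolding sw_def swi_def ucell_def inD_def d2_def plus_nb_def times_nb_def nb_def
  apply (auto simp: surj_def inj_on_def)
  done

lemma rx_props:
  "rx z \<in> ucell (rxi kl) \<longleftrightarrow> z \<in> ucell kl" "inD (rx p) (rx q) (rx z) = inD p q z" "surj rx" "surj rxi" "inj rxi"
  "d2 (rx p) (rx q) = d2 p q"
  "plus_nb (rxi c) (rxi c') = plus_nb c c'" "times_nb (rxi c) (rxi c') = times_nb c c'" "nb (rxi c) (rxi c') = nb c c'"
  unfolding rx_def rxi_def ucell_def inD_def d2_def plus_nb_def times_nb_def nb_def
  apply (auto simp: surj_def inj_on_def algebra_simps)
    apply (rule_tac x="1 - a" in exI, simp)
   apply (rule_tac x="- a" in exI, simp)
  apply (simp add: power2_commute)
  done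

lemma ry_props:
  "ry z \<in> ucell (ryi kl) \<longleftrightarrow> z \<in> ucell kl" "inD (ry p) (ry q) (ry z) = inD p q z" "surj ry" "surj ryi" "inj ryi"
  "d2 (ry p) (ry q) = d2 p q"
  "plus_nb (ryi c) (ryi c') = plus_nb c c'" "times_nb (ryi c) (ryi c') = times_nb c c'" "nb (ryi c) (ryi c') = nb c c'"
  unfolding ry_def ryi_def ucell_def inD_def d2_def plus_nb_def times_nb_def nb_def
  apply (auto simp: surj_def inj_on_def algebra_simps)
    apply (rule_tac x="1 - b" in exI, simp)
   apply (rule_tac x="- b" in exI, simp)
  apply (simp add: power2_commute)
  done

lemma tr_props:
  "tr m z \<in> ucell (tri m kl) \<longleftrightarrow> z \<in> ucell kl" "inD (tr m p) (tr m q) (tr m z) = inD p q z" "surj (tr m)" "surj (tri m)" "inj (tri m)"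
  "d2 (tr m p) (tr m q) = d2 p q"
  "plus_nb (tri m c) (tri m c') = plus_nb c c'" "times_nb (tri m c) (tri m c') = times_nb c c'" "nb (tri m c) (tri m c') = nb c c'"
  unfolding tr_def tri_def ucell_def inD_def d2_def plus_nb_def times_nb_def nb_def
  apply (auto simp: surj_def inj_on_def algebra_simps)
  done

lemma L1: assumes "p1 \<in> ucell (0,0)" "p2 \<in> ucell (0,0)" "p3 \<in> ucell (i,j)" "p4 \<in> ucell (i,j)"
  "0 \<le> i" "0 \<le> j"
  shows "Qp (0,0) (i,j) (Hu p1 p2 p3 p4) (d2 p2 p3)"
proof (cases "j \<le> i")
  case True thus ?thesis using core assms by blast
next
  case False
  have "Qp (swi (0,0)) (swi (i,j)) (Hu (sw p1) (sw p2) (sw p3) (sw p4)) (d2 (sw p2) (sw p3))"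
    using core[of "sw p1" "sw p2" "sw p3" j i "sw p4"] assms False sw_props(1)[of _ "(0,0)"] sw_props(1)[of _ "(i,j)"]
    by (simp add: swi_def)
  thus ?thesis by (rule sym_step[OF sw_props(1-6) sw_props(7-9)])
qed

lemma L2: assumes "p1 \<in> ucell (0,0)" "p2 \<in> ucell (0,0)" "p3 \<in> ucell (i,j)" "p4 \<in> ucell (i,j)"
  "0 \<le> j"
  shows "Qp (0,0) (i,j) (Hu p1 p2 p3 p4) (d2 p2 p3)"
proof (cases "0 \<le> i")
  case True thus ?thesis using L1 assms by blast
next
  case False
  have "Qp (rxi (0,0)) (rxi (i,j)) (Hu (rx p1) (rx p2) (rx p3) (rx p4)) (d2 (rx p2) (rx p3))"
    using L1[of "rx p1" "rx p2" "rx p3" "-i" j "rx p4"] assms False rx_props(1)[of _ "(0,0)"] rx_props(1)[of _ "(i,j)"]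
    by (simp add: rxi_def)
  thus ?thesis by (rule sym_step[OF rx_props(1-6) rx_props(7-9)])
qed

lemma L3: assumes "p1 \<in> ucell (0,0)" "p2 \<in> ucell (0,0)" "p3 \<in> ucell (i,j)" "p4 \<in> ucell (i,j)"
  shows "Qp (0,0) (i,j) (Hu p1 p2 p3 p4) (d2 p2 p3)"
proof (cases "0 \<le> j")
  case True thus ?thesis using L2 assms by blast
next
  case False
  have "Qp (ryi (0,0)) (ryi (i,j)) (Hu (ry p1) (ry p2) (ry p3) (ry p4)) (d2 (ry p2) (ry p3))"
    using L2[of "ry p1" "ry p2" "ry p3" i "-j" "ry p4"] assms False ry_props(1)[of _ "(0,0)"] ry_props(1)[of _ "(i,j)"]
    by (simp add: ryi_def)
  thus ?thesis by (rule sym_step[OF ry_props(1-6) ry_props(7-9)])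
qed

lemma L4: assumes "p1 \<in> ucell c'" "p2 \<in> ucell c'" "p3 \<in> ucell c" "p4 \<in> ucell c"
  shows "Qp c' c (Hu p1 p2 p3 p4) (d2 p2 p3)"
proof -
  have e: "tri c' c' = (0,0)" by (simp add: tri_def)
  obtain i j where ij: "tri c' c = (i,j)" by force
  have "Qp (tri c' c') (tri c' c) (Hu (tr c' p1) (tr c' p2) (tr c' p3) (tr c' p4)) (d2 (tr c' p2) (tr c' p3))"
    unfolding e ij
    by (rule L3) (use assms tr_props(1)[of c' _ c'] tr_props(1)[of c' _ c] e ij in auto)
  thus ?thesis by (rule sym_step[OF tr_props(1-6) tr_props(7-9)])
qed



lemma dist_sq: "(dist (a::real\<times>real) b)^2 = (fst a - fst b)^2 + (snd a - snd b)^2"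
proof -
  have "dist a b = dist (fst a, snd a) (fst b, snd b)" by simp
  also have "\<dots> = sqrt ((fst a - fst b)^2 + (snd a - snd b)^2)"
    unfolding dist_Pair_Pair by (simp add: dist_real_def)
  finally show ?thesis by simp
qed

lemma side_pos: "side > 0" unfolding side_def by simp
lemma side_sq: "side^2 = 1/2" unfolding side_def by (simp add: power_divide)

definition U :: "real \<times> real \<Rightarrow> real \<times> real \<Rightarrow> real \<times> real" where
  "U off z = ((fst z - fst off) / side, (snd z - snd off) / side)"
definition V :: "real \<times> real \<Rightarrow> real \<times> real \<Rightarrow> real \<times> real" where
  "V off w = (fst off + side * fst w, snd off + side * snd w)"

lemma UV: "U off (V off w) = w"
  unfolding U_def V_def using side_pos by simp

lemma cell_U: "z \<in> cell off ij \<longleftrightarrow> U off z \<in> ucell ij"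
proof -
  have s: "side > 0" by (rule side_pos)
  have "\<And>a x. (a::real) * side < x \<longleftrightarrow> a < x / side" using s by (simp add: pos_less_divide_eq)
  moreover have "\<And>a x. x < (a::real) * side \<longleftrightarrow> x / side < a" using s by (simp add: pos_divide_less_eq)
  ultimately show ?thesis unfolding cell_def ucell_def U_def
    by (simp add: pos_less_divide_eq[OF s] pos_divide_less_eq[OF s] algebra_simps)
qed

lemma diskD_inD: "z \<in> diskD x y \<longleftrightarrow> inD x y z"
proof -
  have "z \<in> diskD x y \<longleftrightarrow> dist (midpoint x y) z \<le> dist x y / 2" unfolding diskD_def by simp
  also have "\<dots> \<longleftrightarrow> (dist (midpoint x y) z)^2 \<le> (dist x y / 2)^2"
    using power_mono_iff[of "dist (midpoint x y) z" "dist x y / 2" 2] by simp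
  also have "\<dots> \<longleftrightarrow> ((fst x + fst y)/2 - fst z)^2 + ((snd x + snd y)/2 - snd z)^2 \<le> ((fst x - fst y)^2 + (snd x - snd y)^2)/4"
    by (simp add: power_divide dist_sq midpoint_def)
  also have "\<dots> \<longleftrightarrow> inD x y z"
  proof -
    have "((fst x + fst y)/2 - fst z)^2 + ((snd x + snd y)/2 - snd z)^2 - ((fst x - fst y)^2 + (snd x - snd y)^2)/4
       = (fst x - fst z) * (fst y - fst z) + (snd x - snd z) * (snd y - snd z)"
      by (simp add: power2_eq_square field_simps)
    thus ?thesis unfolding inD_def by linarith
  qed
  finally show ?thesis .
qed

lemma Ud: "fst (U off x) - fst (U off z) = (fst x - fst z) / side" "snd (U off x) - snd (U off z) = (snd x - snd z) / side"
  unfolding U_def by (simp_all add: diff_divide_distrib)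

lemma frac4: "(a1/t)*(b1/t) + (c1/t)*(e1/t) = (a1*b1 + c1*e1)/(t*(t::real))"
  by (simp add: add_divide_distrib)

lemma inD_U: "inD (U off x) (U off y) (U off z) \<longleftrightarrow> inD x y z"
proof -
  have s: "side > 0" by (rule side_pos)
  have "inD (U off x) (U off y) (U off z) \<longleftrightarrow>
     ((fst x - fst z) * (fst y - fst z) + (snd x - snd z) * (snd y - snd z)) / (side * side) \<le> 0"
    unfolding inD_def Ud frac4 by simp
  also have "\<dots> \<longleftrightarrow> inD x y z" unfolding inD_def using s by (simp add: divide_le_0_iff mult_le_0_iff)
  finally show ?thesis .
qed

lemma d2_U: "d2 (U off p) (U off q) = 2 * (dist p q)^2"
proof -
  have s: "side > 0" by (rule side_pos)
  have "d2 (U off p) (U off q) = ((fst p - fst q)^2 + (snd p - snd q)^2) / side^2"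
    unfolding d2_def by (simp only: Ud power_divide add_divide_distrib)
  thus ?thesis unfolding side_sq dist_sq by simp
qed

lemma hit_U: "cells_hit off (diskD p1 p2 \<union> diskD p2 p3 \<union> diskD p3 p4) = Hu (U off p1) (U off p2) (U off p3) (U off p4)"
proof -
  have "\<And>ij. (cell off ij \<inter> (diskD p1 p2 \<union> diskD p2 p3 \<union> diskD p3 p4) \<noteq> {}) \<longleftrightarrow>
     (\<exists>w\<in>ucell ij. inD (U off p1) (U off p2) w \<or> inD (U off p2) (U off p3) w \<or> inD (U off p3) (U off p4) w)"
  proof
    fix ij assume "cell off ij \<inter> (diskD p1 p2 \<union> diskD p2 p3 \<union> diskD p3 p4) \<noteq> {}"
    then obtain z where "z \<in> cell off ij" "z \<in> diskD p1 p2 \<union> diskD p2 p3 \<union> diskD p3 p4" by blast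
    thus "\<exists>w\<in>ucell ij. inD (U off p1) (U off p2) w \<or> inD (U off p2) (U off p3) w \<or> inD (U off p3) (U off p4) w"
      using cell_U diskD_inD inD_U by blast
  next
    fix ij assume "\<exists>w\<in>ucell ij. inD (U off p1) (U off p2) w \<or> inD (U off p2) (U off p3) w \<or> inD (U off p3) (U off p4) w"
    then obtain w where w: "w \<in> ucell ij" "inD (U off p1) (U off p2) w \<or> inD (U off p2) (U off p3) w \<or> inD (U off p3) (U off p4) w" by blast
    have "V off w \<in> cell off ij" using w(1) cell_U UV by metis
    moreover have "V off w \<in> diskD p1 p2 \<union> diskD p2 p3 \<union> diskD p3 p4"
      using w(2) diskD_inD inD_U[of off _ _ "V off w"] UV by auto
    ultimately show "cell off ij \<inter> (diskD p1 p2 \<union> diskD p2 p3 \<union> diskD p3 p4) \<noteq> {}" by blast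
  qed
  thus ?thesis unfolding cells_hit_def Hu_def by blast
qed


theorem lemma6:
  fixes off :: "real \<times> real" and c c' :: "int \<times> int" and p1 p2 p3 p4 :: "real \<times> real"
  assumes "p1 \<in> cell off c'" "p2 \<in> cell off c'" "p3 \<in> cell off c" "p4 \<in> cell off c"
  defines "DD \<equiv> diskD p1 p2 \<union> diskD p2 p3 \<union> diskD p3 p4"
  shows "(dist p2 p3 \<le> 1 / sqrt 2 \<longrightarrow> finite (cells_hit off DD) \<and> card (cells_hit off DD) \<le> 8)
       \<and> (dist p2 p3 \<le> 1 \<and> plus_nb c c' \<longrightarrow> finite (cells_hit off DD) \<and> card (cells_hit off DD) \<le> 8)
       \<and> (dist p2 p3 \<le> 1 \<and> times_nb c c' \<longrightarrow> finite (cells_hit off DD) \<and> card (cells_hit off DD) \<le> 10)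
       \<and> (dist p2 p3 \<le> 1 \<and> \<not> nb c c' \<longrightarrow> finite (cells_hit off DD) \<and> card (cells_hit off DD) \<le> 11)"
proof -
  have Q: "Qp c' c (Hu (U off p1) (U off p2) (U off p3) (U off p4)) (d2 (U off p2) (U off p3))"
    by (rule L4) (use assms(1-4) cell_U in auto)
  have H: "cells_hit off DD = Hu (U off p1) (U off p2) (U off p3) (U off p4)"
    unfolding DD_def by (rule hit_U)
  have d: "d2 (U off p2) (U off p3) = 2 * (dist p2 p3)^2" by (rule d2_U)
  have d0: "0 \<le> dist p2 p3" by simp
  have a1: "d2 (U off p2) (U off p3) \<le> 1" if "dist p2 p3 \<le> 1 / sqrt 2"
  proof -
    have "(dist p2 p3)^2 \<le> (1 / sqrt 2)^2" by (rule power_mono[OF that d0])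
    thus ?thesis unfolding d by (simp add: power_divide)
  qed
  have a2: "d2 (U off p2) (U off p3) \<le> 2" if "dist p2 p3 \<le> 1"
  proof -
    have "(dist p2 p3)^2 \<le> 1^2" by (rule power_mono[OF that d0])
    thus ?thesis unfolding d by simp
  qed
  show ?thesis using Q a1 a2 unfolding H Qp_def by blast
qed

end
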